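(* Let $A$ be a faithful Banach algebra and let $B$ be a proper right abstract Segal algebra in $A$. Then $B^* \neq \langle B^* \triangle B^{**}\rangle$. Symmetrically, if $B$ is a proper left abstract Segal algebra in $A$, then $B^* \neq \langle B^{**} \square B^*\rangle$.
   Context: Arens-type module actions: for a Banach algebra $B$, $a,b\in B$, $f\in B^*$, $m\in B^{**}$, define $f\square a\in B^*$ by $\langle f\square a,b\rangle=\langle f,ab\rangle$ and $m\square f\in B^*$ by $\langle m\square f,a\rangle=\langle m,f\square a\rangle$; define $a\triangle f\in B^*$ by $\langle a\triangle f,b\rangle=\langle f,ba\rangle$ and $f\triangle m\in B^*$ by $\langle f\triangle m,a\rangle=\langle m,a\triangle f\rangle$. For sets $X,Y$ of such objects, $\langle X\triangle Y\rangle$ (resp. $\langle X\square Y\rangle$) denotes the linear span of all products $x\triangle y$ (resp. $x\square y$), $x\in X$, $y\in Y$. A faithful Banach algebra $A$ is one whose relevant annihilators are trivial (if $xa=0$ for all $x\in A$, or $ax=0$ for all $x\in A$, then $a=0$). A right abstract Segal algebra in $A$ is a dense subspace $B\subseteq A$ which is a right ideal of $A$ ($BA\subseteq B$) and is a Banach algebra under a norm $\|\cdot\|_B$ such that $\|b\|_A\le C\|b\|_B$ for $b\in B$ and $\|ba\|_B\le C\|b\|_B\|a\|_A$ for $b\in B$, $a\in A$, for some constant $C$; a left abstract Segal algebra is defined symmetrically ($AB\subseteq B$, $\|ab\|_B\le C\|a\|_A\|b\|_B$). It is proper if $\|\cdot\|_A$ and $\|\cdot\|_B$ are not equivalent on $B$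 (equivalently $B\neq A$). *)

theory Defs
  imports "HOL-Analysis.Analysis"
begin

text \<open>Functionals on B are represented
  as real-valued functions on the ambient type which are zero off B (extensional).\<close>

definition faithful_algebra :: "'a::real_normed_algebra itself \<Rightarrow> bool" where
  "faithful_algebra T \<longleftrightarrow>
     (\<forall>a::'a. (\<forall>x. x * a = 0) \<longrightarrow> a = 0) \<and> (\<forall>a::'a. (\<forall>x. a * x = 0) \<longrightarrow> a = 0)"

definition norm_on :: "'a::real_vector set \<Rightarrow> ('a \<Rightarrow> real) \<Rightarrow> bool" where
  "norm_on B nB \<longleftrightarrow>
     (\<forall>b\<in>B. 0 \<le> nB b) \<and> (\<forall>b\<in>B. nB b = 0 \<longleftrightarrow> b = 0) \<and>
     (\<forall>b\<in>B. \<forall>c\<in>B. nB (b + c) \<le> nB b + nB c) \<and>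
     (\<forall>b\<in>B. \<forall>r. nB (r *\<^sub>R b) = \<bar>r\<bar> * nB b)"

definition complete_wrt :: "'a::real_vector set \<Rightarrow> ('a \<Rightarrow> real) \<Rightarrow> bool" where
  "complete_wrt B nB \<longleftrightarrow>
     (\<forall>s::nat \<Rightarrow> 'a. (\<forall>n. s n \<in> B) \<and>
        (\<forall>e>0. \<exists>N. \<forall>m\<ge>N. \<forall>n\<ge>N. nB (s m - s n) < e) \<longrightarrow>
        (\<exists>l\<in>B. (\<lambda>n. nB (s n - l)) \<longlonglongrightarrow> 0))"

definition banach_subalgebra_norm :: "'a::real_normed_algebra set \<Rightarrow> ('a \<Rightarrow> real) \<Rightarrow> bool" where
  "banach_subalgebra_norm B nB \<longleftrightarrow>
     subspace B \<and> (\<forall>b\<in>B. \<forall>c\<in>B. b * c \<in> B) \<and> norm_on B nB \<and> complete_wrt B nB \<and>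
     (\<forall>b\<in>B. \<forall>c\<in>B. nB (b * c) \<le> nB b * nB c)"

definition right_abstract_Segal :: "'a::{real_normed_algebra,banach} set \<Rightarrow> ('a \<Rightarrow> real) \<Rightarrow> bool" where
  "right_abstract_Segal B nB \<longleftrightarrow>
     banach_subalgebra_norm B nB \<and> closure B = UNIV \<and>
     (\<forall>b\<in>B. \<forall>a. b * a \<in> B) \<and>
     (\<exists>C. (\<forall>b\<in>B. norm b \<le> C * nB b) \<and> (\<forall>b\<in>B. \<forall>a. nB (b * a) \<le> C * nB b * norm a))"

definition left_abstract_Segal :: "'a::{real_normed_algebra,banach} set \<Rightarrow> ('a \<Rightarrow> real) \<Rightarrow> bool" where
  "left_abstract_Segal B nB \<longleftrightarrow>
     banach_subalgebra_norm B nB \<and> closure B = UNIV \<and>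
     (\<forall>b\<in>B. \<forall>a. a * b \<in> B) \<and>
     (\<exists>C. (\<forall>b\<in>B. norm b \<le> C * nB b) \<and> (\<forall>b\<in>B. \<forall>a. nB (a * b) \<le> C * norm a * nB b))"

definition proper_Segal :: "'a::real_normed_vector set \<Rightarrow> ('a \<Rightarrow> real) \<Rightarrow> bool" where
  "proper_Segal B nB \<longleftrightarrow>
     \<not> (\<exists>c1>0. \<exists>c2>0. \<forall>b\<in>B. norm b \<le> c1 * nB b \<and> nB b \<le> c2 * norm b)"

definition dual_sp :: "'a::real_vector set \<Rightarrow> ('a \<Rightarrow> real) \<Rightarrow> ('a \<Rightarrow> real) set" where
  "dual_sp B nB = {f. (\<forall>x. x \<notin> B \<longrightarrow> f x = 0) \<and>
      (\<forall>b\<in>B. \<forall>c\<in>B. f (b + c) = f b + f c) \<and> (\<forall>b\<in>B. \<forall>r. f (r *\<^sub>R b) = r * f b) \<and>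
      (\<exists>K. \<forall>b\<in>B. \<bar>f b\<bar> \<le> K * nB b)}"

definition dual_norm :: "'a set \<Rightarrow> ('a \<Rightarrow> real) \<Rightarrow> ('a \<Rightarrow> real) \<Rightarrow> real" where
  "dual_norm B nB f = Sup {\<bar>f b\<bar> | b. b \<in> B \<and> nB b \<le> 1}"

definition bidual_sp :: "'a::real_vector set \<Rightarrow> ('a \<Rightarrow> real) \<Rightarrow> (('a \<Rightarrow> real) \<Rightarrow> real) set" where
  "bidual_sp B nB = {m. (\<forall>f. f \<notin> dual_sp B nB \<longrightarrow> m f = 0) \<and>
      (\<forall>f\<in>dual_sp B nB. \<forall>g\<in>dual_sp B nB. m (\<lambda>x. f x + g x) = m f + m g) \<and>
      (\<forall>f\<in>dual_sp B nB. \<forall>r. m (\<lambda>x. r * f x) = r * m f) \<and>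
      (\<exists>K. \<forall>f\<in>dual_sp B nB. \<bar>m f\<bar> \<le> K * dual_norm B nB f)}"

definition fsq :: "'a::times set \<Rightarrow> ('a \<Rightarrow> real) \<Rightarrow> 'a \<Rightarrow> ('a \<Rightarrow> real)" where
  "fsq B f a = (\<lambda>b. if b \<in> B then f (a * b) else 0)"

definition msq :: "'a::times set \<Rightarrow> (('a \<Rightarrow> real) \<Rightarrow> real) \<Rightarrow> ('a \<Rightarrow> real) \<Rightarrow> ('a \<Rightarrow> real)" where
  "msq B m f = (\<lambda>a. if a \<in> B then m (fsq B f a) else 0)"

definition atr :: "'a::times set \<Rightarrow> 'a \<Rightarrow> ('a \<Rightarrow> real) \<Rightarrow> ('a \<Rightarrow> real)" where
  "atr B a f = (\<lambda>b. if b \<in> B then f (b * a) else 0)"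

definition ftr :: "'a::times set \<Rightarrow> ('a \<Rightarrow> real) \<Rightarrow> (('a \<Rightarrow> real) \<Rightarrow> real) \<Rightarrow> ('a \<Rightarrow> real)" where
  "ftr B f m = (\<lambda>a. if a \<in> B then m (atr B a f) else 0)"

definition lin_span :: "('a \<Rightarrow> real) set \<Rightarrow> ('a \<Rightarrow> real) set" where
  "lin_span S = {g. \<exists>n::nat. \<exists>c::nat \<Rightarrow> real. \<exists>v::nat \<Rightarrow> 'a \<Rightarrow> real.
      (\<forall>i<n. v i \<in> S) \<and> g = (\<lambda>x. \<Sum>i<n. c i * v i x)}"

end

theory Submission
  imports Defs
begin


lemma HB_ext:
  fixes B :: "'a::real_vector set" and p :: "'a \<Rightarrow> real"
  assumes sub: "subspace B" and x0B: "x0 \<in> B" and x0nz: "x0 \<noteq> 0" and px0: "p x0 = 1"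
    and padd: "\<And>b c. b \<in> B \<Longrightarrow> c \<in> B \<Longrightarrow> p (b + c) \<le> p b + p c"
    and phom: "\<And>b r. b \<in> B \<Longrightarrow> p (r *\<^sub>R b) = \<bar>r\<bar> * p b"
  shows "\<exists>g. (\<forall>x. x \<notin> B \<longrightarrow> g x = 0) \<and> (\<forall>b\<in>B. \<forall>c\<in>B. g (b + c) = g b + g c) \<and>
     (\<forall>b\<in>B. \<forall>r. g (r *\<^sub>R b) = r * g b) \<and> (\<forall>b\<in>B. \<bar>g b\<bar> \<le> p b) \<and> g x0 = 1"
proof -
  define A where "A = {G. (\<forall>x v w. (x,v)\<in>G \<longrightarrow> (x,w)\<in>G \<longrightarrow> v = w) \<and> (x0,1)\<in>G \<and>
      (\<forall>x v y w. (x,v)\<in>G \<longrightarrow> (y,w)\<in>G \<longrightarrow> (x+y,v+w)\<in>G) \<and>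
      (\<forall>x v r. (x,v)\<in>G \<longrightarrow> (r *\<^sub>R x, r* v)\<in>G) \<and>
      (\<forall>x v. (x,v)\<in>G \<longrightarrow> x\<in>B \<and> v \<le> p x)}"
  define G0 where "G0 = {(t *\<^sub>R x0, t) | t. True}"
  have G0A: "G0 \<in> A"
  proof -
    have "(t *\<^sub>R x0) \<in> B" for t using sub x0B by (simp add: subspace_scale)
    moreover have "t \<le> p (t *\<^sub>R x0)" for t using phom[OF x0B] px0 by simp
    moreover have "(x0,1) \<in> G0" unfolding G0_def by (rule CollectI, rule exI[of _ 1]) simp
    ultimately show ?thesis unfolding A_def G0_def
      by (auto simp: scaleR_add_left[symmetric] x0nz)
  qed
  have "\<exists>M\<in>A. \<forall>X\<in>A. M \<subseteq> X \<longrightarrow> X = M"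
  proof (rule Zorn_Lemma2, intro ballI)
    fix C assume C: "C \<in> chains A"
    show "\<exists>U\<in>A. \<forall>X\<in>C. X \<subseteq> U"
    proof (cases "C = {}")
      case True thus ?thesis using G0A by blast
    next
      case False
      have CA: "C \<subseteq> A" using C by (rule chainsD2)
      have two: "\<exists>X\<in>C. a \<in> X \<and> b \<in> X" if ha: "a \<in> \<Union>C" "b \<in> \<Union>C" for a b
      proof -
        obtain X Y where "X \<in> C" "Y \<in> C" "a \<in> X" "b \<in> Y" using ha by blast
        thus ?thesis using chainsD[OF C, of X Y] by blast
      qed
      have "\<Union>C \<in> A"
      proof -
        have f1: "v = w" if "(x,v)\<in>\<Union>C" "(x,w)\<in>\<Union>C" for x v w
          using two[OF that] CA unfolding A_def by blast
        have f2: "(x0,1)\<in>\<Union>C" using False CA unfolding A_def by blast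
        have f3: "(x+y,v+w)\<in>\<Union>C" if "(x,v)\<in>\<Union>C" "(y,w)\<in>\<Union>C" for x v y w
          using two[OF that] CA unfolding A_def by blast
        have f4: "(r *\<^sub>R x, r* v)\<in>\<Union>C" if "(x,v)\<in>\<Union>C" for x v r
          using that CA unfolding A_def by blast
        have f5: "x\<in>B \<and> v \<le> p x" if "(x,v)\<in>\<Union>C" for x v
          using that CA unfolding A_def by blast
        show ?thesis unfolding A_def using f1 f2 f3 f4 f5 by blast
      qed
      thus ?thesis by blast
    qed
  qed
  then obtain M where MA: "M \<in> A" and Mmax: "\<And>X. X \<in> A \<Longrightarrow> M \<subseteq> X \<Longrightarrow> X = M" by blast
  have Mf: "\<And>x v w. (x,v)\<in>M \<Longrightarrow> (x,w)\<in>M \<Longrightarrow> v = w"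
   and Mx0: "(x0,1)\<in>M"
   and Madd: "\<And>x v y w. (x,v)\<in>M \<Longrightarrow> (y,w)\<in>M \<Longrightarrow> (x+y,v+w)\<in>M"
   and Msc: "\<And>x v r. (x,v)\<in>M \<Longrightarrow> (r *\<^sub>R x, r* v)\<in>M"
   and MB: "\<And>x v. (x,v)\<in>M \<Longrightarrow> x\<in>B"
   and Mp: "\<And>x v. (x,v)\<in>M \<Longrightarrow> v \<le> p x"
    using MA unfolding A_def by blast+
  have M0: "(0,0) \<in> M" using Msc[OF Mx0, of 0] by simp
  have Mneg: "(-x,-v) \<in> M" if "(x,v)\<in>M" for x v using Msc[OF that, of "-1"] by simp
  have dom: "\<exists>v. (y,v)\<in>M" if yB: "y \<in> B" for y
  proof (rule ccontr)
    assume ny: "\<not> (\<exists>v. (y,v)\<in>M)"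
    define S where "S = {v - p (s - y) | s v. (s,v)\<in>M}"
    define c where "c = Sup S"
    have key: "v - p (s - y) \<le> p (s' + y) - v'" if "(s,v)\<in>M" "(s',v')\<in>M" for s v s' v'
    proof -
      have "v + v' \<le> p (s + s')" using Mp[OF Madd[OF that]] .
      also have "p (s + s') \<le> p (s - y) + p (s' + y)"
        using padd[of "s - y" "s' + y"] sub MB[OF that(1)] MB[OF that(2)] yB
        by (simp add: subspace_diff subspace_add)
      finally show ?thesis by simp
    qed
    have Sne: "S \<noteq> {}" using M0 unfolding S_def by blast
    have Sbdd: "bdd_above S" unfolding S_def bdd_above_def using key[OF _ M0] by auto
    have c_ge: "v - p (s - y) \<le> c" if "(s,v)\<in>M" for s v
      unfolding c_def by (rule cSup_upper[OF _ Sbdd]) (use that S_def in blast)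
    have c_le: "c \<le> p (s' + y) - v'" if "(s',v')\<in>M" for s' v'
      unfolding c_def by (rule cSup_least[OF Sne]) (use key[OF _ that] S_def in blast)
    define M' where "M' = {(s + t *\<^sub>R y, v + t * c) | s v t. (s,v)\<in>M}"
    have MM': "M \<subseteq> M'" unfolding M'_def by force
    have yM': "(y, c) \<in> M'" unfolding M'_def using M0 by force
    have M'A: "M' \<in> A"
    proof -
      have f1: "v1 = w1" if h: "(x,v1)\<in>M'" "(x,w1)\<in>M'" for x v1 w1
      proof -
        obtain s v t where 1: "x = s + t *\<^sub>R y" "v1 = v + t*c" "(s,v)\<in>M" using h(1) unfolding M'_def by blast
        obtain s' v' t' where 2: "x = s' + t' *\<^sub>R y" "w1 = v' + t'*c" "(s',v')\<in>M" using h(2) unfolding M'_def by blast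
        have tt: "t = t'"
        proof (rule ccontr)
          assume "t \<noteq> t'"
          have "(t - t') *\<^sub>R y = s' - s" using 1 2 by (simp add: algebra_simps)
          hence "(1/(t-t')) *\<^sub>R ((t - t') *\<^sub>R y) = (1/(t-t')) *\<^sub>R (s' - s)" by simp
          hence "y = (1/(t-t')) *\<^sub>R (s' - s)" using \<open>t \<noteq> t'\<close> by simp
          moreover have "(s' - s, v' - v) \<in> M" using Madd[OF 2(3) Mneg[OF 1(3)]] by simp
          ultimately have "(y, (1/(t-t')) * (v' - v)) \<in> M" using Msc[of "s' - s" "v' - v" "1/(t-t')"] by simp
          thus False using ny by blast
        qed
        hence "s = s'" using 1 2 by simp
        thus ?thesis using 1 2 tt Mf by blast
      qed
      have f2: "(x0,1)\<in>M'" using MM' Mx0 by blast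
      have f3: "(x+x',v1+w1)\<in>M'" if h: "(x,v1)\<in>M'" "(x',w1)\<in>M'" for x v1 x' w1
      proof -
        obtain s v t where 1: "x = s + t *\<^sub>R y" "v1 = v + t*c" "(s,v)\<in>M" using h(1) unfolding M'_def by blast
        obtain s' v' t' where 2: "x' = s' + t' *\<^sub>R y" "w1 = v' + t'*c" "(s',v')\<in>M" using h(2) unfolding M'_def by blast
        have "x + x' = (s + s') + (t + t') *\<^sub>R y" "v1 + w1 = (v + v') + (t+t')*c"
          using 1 2 by (simp_all add: algebra_simps)
        thus ?thesis unfolding M'_def using Madd[OF 1(3) 2(3)] by blast
      qed
      have f4: "(r *\<^sub>R x, r * v1)\<in>M'" if h: "(x,v1)\<in>M'" for x v1 r
      proof -
        obtain s v t where 1: "x = s + t *\<^sub>R y" "v1 = v + t*c" "(s,v)\<in>M" using h(1) unfolding M'_def by blast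
        have "r *\<^sub>R x = r *\<^sub>R s + (r*t) *\<^sub>R y" "r * v1 = r * v + (r*t)*c"
          using 1 by (simp_all add: algebra_simps)
        thus ?thesis unfolding M'_def using Msc[OF 1(3)] by blast
      qed
      have f5: "x\<in>B \<and> v1 \<le> p x" if h: "(x,v1)\<in>M'" for x v1
      proof -
        obtain s v t where 1: "x = s + t *\<^sub>R y" "v1 = v + t*c" "(s,v)\<in>M" using h(1) unfolding M'_def by blast
        have sB: "s \<in> B" using MB[OF 1(3)] .
        have xB: "x \<in> B" using 1 sB yB sub by (simp add: subspace_add subspace_scale)
        have "v + t * c \<le> p (s + t *\<^sub>R y)"
        proof (cases t "0::real" rule: linorder_cases)
          case equal thus ?thesis using Mp[OF 1(3)] by simp
        next
          case greater
          have m: "((1/t) *\<^sub>R s, (1/t) * v) \<in> M" using Msc[OF 1(3)] .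
          have "c \<le> p ((1/t) *\<^sub>R s + y) - (1/t) * v" using c_le[OF m] .
          hence "t * c \<le> t * p ((1/t) *\<^sub>R s + y) - v" using greater
            by (simp add: field_simps)
          also have "t * p ((1/t) *\<^sub>R s + y) = p (t *\<^sub>R ((1/t) *\<^sub>R s + y))"
            using phom[of "(1/t) *\<^sub>R s + y" t] greater sB yB sub
            by (simp add: subspace_add subspace_scale)
          also have "t *\<^sub>R ((1/t) *\<^sub>R s + y) = s + t *\<^sub>R y" using greater
            by (simp add: scaleR_add_right)
          finally show ?thesis by simp
        next
          case less
          define u where "u = -t"
          have u: "u > 0" using less u_def by simp
          have m: "((1/u) *\<^sub>R s, (1/u) * v) \<in> M" using Msc[OF 1(3)] .
          have "(1/u) * v - p ((1/u) *\<^sub>R s - y) \<le> c" using c_ge[OF m] .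
          hence "v - u * p ((1/u) *\<^sub>R s - y) \<le> u * c" using u
            by (simp add: field_simps)
          also have "u * p ((1/u) *\<^sub>R s - y) = p (u *\<^sub>R ((1/u) *\<^sub>R s - y))"
            using phom[of "(1/u) *\<^sub>R s - y" u] u sB yB sub
            by (simp add: subspace_diff subspace_scale)
          also have "u *\<^sub>R ((1/u) *\<^sub>R s - y) = s + t *\<^sub>R y" using u u_def
            by (simp add: scaleR_diff_right)
          finally show ?thesis using u_def by simp
        qed
        thus ?thesis using xB 1 by simp
      qed
      show ?thesis unfolding A_def using f1 f2 f3 f4 f5 by blast
    qed
    have "M' = M" using Mmax[OF M'A MM'] .
    thus False using yM' ny by blast
  qed
  define g where "g x = (if x \<in> B then (THE v. (x,v)\<in>M) else 0)" for x
  have gM: "(x, g x) \<in> M" if xB: "x \<in> B" for x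
  proof -
    obtain v where v: "(x,v)\<in>M" using dom[OF xB] by blast
    have "(THE v. (x,v)\<in>M) = v" using v Mf by blast
    thus ?thesis using v xB g_def by simp
  qed
  have gE: "g x = v" if "(x,v)\<in>M" for x v using Mf[OF gM[OF MB[OF that]] that] .
  show ?thesis
  proof (intro exI conjI ballI allI impI)
    show "g x = 0" if "x \<notin> B" for x using that g_def by simp
    show "g (b + c) = g b + g c" if "b\<in>B" "c\<in>B" for b c using gE[OF Madd[OF gM gM]] that by simp
    show "g (r *\<^sub>R b) = r * g b" if "b\<in>B" for b r using gE[OF Msc[OF gM]] that by simp
    show "\<bar>g b\<bar> \<le> p b" if "b\<in>B" for b
    proof -
      have "g b \<le> p b" using Mp[OF gM[OF that]] .
      moreover have "- g b \<le> p (- b)" using Mp[OF Mneg[OF gM[OF that]]] .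
      moreover have "p (- b) = p b" using phom[OF that, of "-1"] by simp
      ultimately show ?thesis by simp
    qed
    show "g x0 = 1" using gE[OF Mx0] .
  qed
qed



lemma abs_suminf_bound:
  fixes a w :: "nat \<Rightarrow> real"
  assumes "\<And>k. \<bar>a k\<bar> \<le> w k * M" "summable w"
  shows "summable a" "\<bar>suminf a\<bar> \<le> suminf w * M"
proof -
  have sw: "summable (\<lambda>k. w k * M)" using assms(2) by (rule summable_mult2)
  show sa: "summable a" by (rule summable_comparison_test'[OF sw]) (use assms(1) in simp)
  have sab: "summable (\<lambda>k. \<bar>a k\<bar>)" by (rule summable_comparison_test'[OF sw]) (use assms(1) in simp)
  have "\<bar>suminf a\<bar> \<le> (\<Sum>k. \<bar>a k\<bar>)" by (rule summable_rabs[OF sab])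
  also have "\<dots> \<le> (\<Sum>k. w k * M)" by (rule suminf_le[OF assms(1) sab sw])
  also have "\<dots> = suminf w * M" by (rule suminf_mult2[symmetric, OF assms(2)])
  finally show "\<bar>suminf a\<bar> \<le> suminf w * M" .
qed

lemma divide_mult_cancel_r0: "(r::real) \<noteq> 0 \<Longrightarrow> x / r * r = x"
  by simp

lemma gliding_hump:
  fixes B :: "'a::real_normed_vector set" and nB :: "'a \<Rightarrow> real"
  assumes sub: "subspace B" and nB: "norm_on B nB"
    and Cb: "\<forall>b\<in>B. norm b \<le> C * nB b" and prp: "proper_Segal B nB"
    and allA: "\<forall>f\<in>dual_sp B nB. \<exists>K. \<forall>b\<in>B. \<bar>f b\<bar> \<le> K * norm b"
  shows False
proof -
  have nBall: "(\<forall>b\<in>B. 0 \<le> nB b) \<and> (\<forall>b\<in>B. nB b = 0 \<longleftrightarrow> b = 0) \<and>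
     (\<forall>b\<in>B. \<forall>c\<in>B. nB (b + c) \<le> nB b + nB c) \<and>
     (\<forall>b\<in>B. \<forall>r. nB (r *\<^sub>R b) = \<bar>r\<bar> * nB b)" using nB unfolding norm_on_def .
  have nB0: "nB b \<ge> 0" if "b \<in> B" for b using nBall that by simp
  have nBz: "nB b = 0 \<longleftrightarrow> b = 0" if "b \<in> B" for b using conjunct1[OF conjunct2[OF nBall]] that by simp
  have nBadd: "nB (b + c) \<le> nB b + nB c" if "b \<in> B" "c \<in> B" for b c
    using nBall that by simp
  have nBhom: "nB (r *\<^sub>R b) = \<bar>r\<bar> * nB b" if "b \<in> B" for b r
    using nBall that by simp
  have small: "\<exists>x\<in>B. nB x = 1 \<and> norm x < d" if d: "d > 0" for d
  proof -
    have "\<not> (\<forall>b\<in>B. norm b \<le> max C 1 * nB b \<and> nB b \<le> (1/d) * norm b)"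
    proof
      assume H: "\<forall>b\<in>B. norm b \<le> max C 1 * nB b \<and> nB b \<le> (1/d) * norm b"
      have c1: "max C 1 > 0" by simp
      have c2: "1/d > 0" using d by simp
      have "\<exists>c1>0. \<exists>c2>0. \<forall>b\<in>B. norm b \<le> c1 * nB b \<and> nB b \<le> c2 * norm b"
        using H c1 c2 by blast
      thus False using prp unfolding proper_Segal_def by blast
    qed
    moreover have "norm b \<le> max C 1 * nB b" if "b \<in> B" for b
    proof -
      have "C * nB b \<le> max C 1 * nB b" using nB0[OF that] by (simp add: mult_right_mono)
      moreover have "norm b \<le> C * nB b" using Cb that by blast
      ultimately show ?thesis by linarith
    qed
    ultimately obtain b where bB: "b \<in> B" and ngt: "\<not> nB b \<le> (1/d) * norm b" by blast
    have gt: "nB b > (1/d) * norm b" using ngt by simp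
    have "(1/d) * norm b \<ge> 0" using d by simp
    hence pos: "nB b > 0" using gt by linarith
    define x where "x = (1 / nB b) *\<^sub>R b"
    have xB: "x \<in> B" using bB sub unfolding x_def by (simp add: subspace_scale)
    have "nB x = 1" using nBhom[OF bB, of "1 / nB b"] pos unfolding x_def by simp
    moreover have "norm x < d"
    proof -
      have "norm x = norm b / nB b" using pos unfolding x_def by simp
      also have "\<dots> < d" using gt pos d by (simp add: field_simps)
      finally show ?thesis .
    qed
    ultimately show ?thesis using xB by blast
  qed
  have hb: "\<exists>g. g \<in> dual_sp B nB \<and> g x = 1 \<and> (\<forall>b\<in>B. \<bar>g b\<bar> \<le> nB b)"
    if xB: "x \<in> B" and x1: "nB x = 1" for x
  proof -
    have "x \<noteq> 0" using x1 nBz[OF xB] by auto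
    have ex: "\<exists>g. (\<forall>x. x \<notin> B \<longrightarrow> g x = 0) \<and> (\<forall>b\<in>B. \<forall>c\<in>B. g (b + c) = g b + g c) \<and>
        (\<forall>b\<in>B. \<forall>r. g (r *\<^sub>R b) = r * g b) \<and> (\<forall>b\<in>B. \<bar>g b\<bar> \<le> nB b) \<and> g x = 1"
      by (rule HB_ext[OF sub xB \<open>x \<noteq> 0\<close> x1 nBadd nBhom])
    from ex obtain g where g: "(\<forall>x. x \<notin> B \<longrightarrow> g x = 0) \<and> (\<forall>b\<in>B. \<forall>c\<in>B. g (b + c) = g b + g c) \<and>
        (\<forall>b\<in>B. \<forall>r. g (r *\<^sub>R b) = r * g b) \<and> (\<forall>b\<in>B. \<bar>g b\<bar> \<le> nB b) \<and> g x = 1" ..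
    have g1: "\<forall>x. x \<notin> B \<longrightarrow> g x = 0" using g by (rule conjunct1)
    have g2: "\<forall>b\<in>B. \<forall>c\<in>B. g (b + c) = g b + g c" using g by (elim conjE)
    have g3: "\<forall>b\<in>B. \<forall>r. g (r *\<^sub>R b) = r * g b" using g by (elim conjE)
    have g4: "\<forall>b\<in>B. \<bar>g b\<bar> \<le> nB b" using g by (elim conjE)
    have g5: "g x = 1" using g by (elim conjE)
    have "\<exists>K. \<forall>b\<in>B. \<bar>g b\<bar> \<le> K * nB b" using g4 by (intro exI[of _ 1]) simp
    hence "g \<in> dual_sp B nB" unfolding dual_sp_def by (intro CollectI conjI g1 g2 g3)
    thus ?thesis using g4 g5 by (intro exI[of _ g] conjI)
  qed
  have kb: "\<exists>K. K \<ge> 0 \<and> (\<forall>b\<in>B. \<bar>g b\<bar> \<le> K * norm b)" if gd: "g \<in> dual_sp B nB" for g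
  proof -
    obtain K where K: "\<forall>b\<in>B. \<bar>g b\<bar> \<le> K * norm b" using allA gd by blast
    have "\<forall>b\<in>B. \<bar>g b\<bar> \<le> max K 0 * norm b"
    proof
      fix b assume "b \<in> B"
      hence "\<bar>g b\<bar> \<le> K * norm b" using K by blast
      moreover have "K * norm b \<le> max K 0 * norm b" by (rule mult_right_mono) simp_all
      ultimately show "\<bar>g b\<bar> \<le> max K 0 * norm b" by linarith
    qed
    thus ?thesis by (intro exI[of _ "max K 0"]) simp
  qed
  define e :: "nat \<Rightarrow> real" where "e j = (1/4)^j" for j
  define dl where "dl j s = e j / (3 * (real j + 1) * (s + 1))" for j s
  define X where "X j s = (SOME x. x \<in> B \<and> nB x = 1 \<and> norm x < dl j s)" for j s
  define G where "G x = (SOME g. g \<in> dual_sp B nB \<and> g x = 1 \<and> (\<forall>b\<in>B. \<bar>g b\<bar> \<le> nB b))" for x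
  define KB where "KB g = (SOME K. K \<ge> 0 \<and> (\<forall>b\<in>B. \<bar>g b\<bar> \<le> K * norm b))" for g
  define S where "S = rec_nat 0 (\<lambda>j s. s + e j * KB (G (X j s)))"
  define x where "x j = X j (S j)" for j
  define g where "g j = G (x j)" for j
  have S0: "S 0 = 0" and SS: "S (Suc j) = S j + e j * KB (g j)" for j
    unfolding S_def g_def x_def by simp_all
  have epos: "e j > 0" for j unfolding e_def by simp
  have Xs: "X j s \<in> B \<and> nB (X j s) = 1 \<and> norm (X j s) < dl j s" if "s \<ge> 0" for j s
  proof -
    have "dl j s > 0" unfolding dl_def using epos[of j] that by simp
    from small[OF this] show ?thesis unfolding X_def by (rule someI2_bex) blast
  qed
  have Gs: "G y \<in> dual_sp B nB \<and> G y y = 1 \<and> (\<forall>b\<in>B. \<bar>G y b\<bar> \<le> nB b)" if "y \<in> B" "nB y = 1" for y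
    using hb[OF that] unfolding G_def by (rule someI_ex)
  have KBs: "KB h \<ge> 0 \<and> (\<forall>b\<in>B. \<bar>h b\<bar> \<le> KB h * norm b)" if "h \<in> dual_sp B nB" for h
    using kb[OF that] unfolding KB_def by (rule someI_ex)
  have Snn: "S j \<ge> 0" for j
  proof (induction j)
    case 0 thus ?case using S0 by simp
  next
    case (Suc j)
    have xs: "x j \<in> B" "nB (x j) = 1" using Xs[OF Suc] unfolding x_def by auto
    have "KB (g j) \<ge> 0" using KBs Gs[OF xs] unfolding g_def by blast
    thus ?case using SS[of j] Suc epos[of j] by simp
  qed
  have xs: "x j \<in> B" "nB (x j) = 1" "norm (x j) < dl j (S j)" for j
    using Xs[OF Snn[of j]] unfolding x_def by auto
  have gs: "g j \<in> dual_sp B nB" "g j (x j) = 1" "\<forall>b\<in>B. \<bar>g j b\<bar> \<le> nB b" for j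
    using Gs[OF xs(1,2)] unfolding g_def by auto
  have ks: "KB (g j) \<ge> 0" "\<forall>b\<in>B. \<bar>g j b\<bar> \<le> KB (g j) * norm b" for j
    using KBs[OF gs(1)] by auto
  have Ssum: "S j = (\<Sum>k<j. e k * KB (g k))" for j
    by (induction j) (simp_all add: S0 SS)
  have gdual: "(\<forall>y. y \<notin> B \<longrightarrow> g j y = 0) \<and> (\<forall>b\<in>B. \<forall>c\<in>B. g j (b + c) = g j b + g j c) \<and>
      (\<forall>b\<in>B. \<forall>r. g j (r *\<^sub>R b) = r * g j b)" for j
    using gs(1)[of j] unfolding dual_sp_def by blast
  have se: "summable e" unfolding e_def by (rule summable_geometric) simp
  have sume: "suminf e = 4/3" unfolding e_def using suminf_geometric[of "1/4::real"] by simp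
  define f where "f y = (\<Sum>k. e k * g k y)" for y
  have fb: "summable (\<lambda>k. e k * g k b)" "\<bar>f b\<bar> \<le> 4/3 * nB b" if "b \<in> B" for b
  proof -
    have "\<bar>e k * g k b\<bar> \<le> e k * nB b" for k
      using gs(3)[of k] that epos[of k] by (simp add: abs_mult mult_left_mono)
    from abs_suminf_bound[OF this se] show "summable (\<lambda>k. e k * g k b)" "\<bar>f b\<bar> \<le> 4/3 * nB b"
      unfolding f_def sume by auto
  qed
  have fdual: "f \<in> dual_sp B nB"
  proof -
    have "f y = 0" if "y \<notin> B" for y unfolding f_def using gdual that by simp
    moreover have "f (b + c) = f b + f c" if "b \<in> B" "c \<in> B" for b c
    proof -
      have "f (b + c) = (\<Sum>k. e k * g k b + e k * g k c)"
        unfolding f_def using gdual that by (simp add: distrib_left)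
      also have "\<dots> = f b + f c" unfolding f_def by (rule suminf_add[OF fb(1)[OF that(1)] fb(1)[OF that(2)], symmetric])
      finally show ?thesis .
    qed
    moreover have "f (r *\<^sub>R b) = r * f b" if "b \<in> B" for b r
    proof -
      have "f (r *\<^sub>R b) = (\<Sum>k. r * (e k * g k b))"
        unfolding f_def using gdual that by (simp add: algebra_simps)
      also have "\<dots> = r * f b" unfolding f_def by (rule suminf_mult[OF fb(1)[OF that]])
      finally show ?thesis .
    qed
    ultimately show ?thesis unfolding dual_sp_def using fb(2) by (auto intro!: exI[of _ "4/3"])
  qed
  obtain K where K0: "K \<ge> 0" and fK: "\<forall>b\<in>B. \<bar>f b\<bar> \<le> K * norm b" using kb[OF fdual] by blast
  define j where "j = nat \<lceil>K\<rceil>"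
  have jK: "real j \<ge> K" unfolding j_def by linarith
  define a where "a k = e k * g k (x j)" for k
  have sa: "summable a" unfolding a_def using fb(1)[OF xs(1)] .
  have split: "f (x j) = (\<Sum>n. a (n + Suc j)) + (\<Sum>k<j. a k) + e j"
    using suminf_split_initial_segment[OF sa, of "Suc j"] gs(2)[of j] unfolding f_def a_def by simp
  have tail: "\<bar>\<Sum>n. a (n + Suc j)\<bar> \<le> e j / 3"
  proof -
    have w: "(\<lambda>n. e (n + Suc j)) = (\<lambda>n. e (Suc j) * (1/4)^n)" unfolding e_def by (rule ext) (simp add: power_add mult_ac)
    have sw: "summable (\<lambda>n. e (n + Suc j))" unfolding w by (rule summable_mult, rule summable_geometric) simp
    have sumw: "(\<Sum>n. e (n + Suc j)) = e j / 3"
      unfolding w suminf_mult[OF summable_geometric[of "1/4::real"], simplified] 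
      using suminf_geometric[of "1/4::real"] by (simp add: e_def)
    have "\<bar>a (n + Suc j)\<bar> \<le> e (n + Suc j) * 1" for n
    proof -
      have h: "\<bar>g (n + Suc j) (x j)\<bar> \<le> 1"
        using bspec[OF gs(3)[of "n + Suc j"] xs(1)[of j]] xs(2)[of j] by simp
      have "\<bar>a (n + Suc j)\<bar> = e (n + Suc j) * \<bar>g (n + Suc j) (x j)\<bar>"
        unfolding a_def using epos[of "n + Suc j"] by (simp add: abs_mult)
      also have "\<dots> \<le> e (n + Suc j) * 1" using h epos[of "n + Suc j"] by (intro mult_left_mono) auto
      finally show ?thesis .
    qed
    from abs_suminf_bound(2)[OF this sw] show ?thesis using sumw by simp
  qed
  have head: "\<bar>\<Sum>k<j. a k\<bar> \<le> e j / 3"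
  proof -
    have "\<bar>\<Sum>k<j. a k\<bar> \<le> (\<Sum>k<j. \<bar>a k\<bar>)" by (rule sum_abs)
    also have "\<dots> \<le> (\<Sum>k<j. e k * KB (g k) * norm (x j))"
    proof (rule sum_mono)
      fix k show "\<bar>a k\<bar> \<le> e k * KB (g k) * norm (x j)"
        using ks(2)[of k] xs(1)[of j] epos[of k] unfolding a_def
        by (simp add: abs_mult mult.assoc mult_left_mono)
    qed
    also have "\<dots> = S j * norm (x j)" unfolding Ssum by (simp add: sum_distrib_right)
    also have "\<dots> \<le> (S j + 1) * dl j (S j)"
    proof -
      have "S j * norm (x j) \<le> S j * dl j (S j)" using xs(3)[of j] Snn[of j] by (simp add: mult_left_mono)
      moreover have "dl j (S j) > 0" unfolding dl_def using epos[of j] Snn[of j] by simp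
      ultimately show ?thesis by (simp add: distrib_right)
    qed
    also have "\<dots> = e j / (3 * (real j + 1))"
    proof -
      have s0: "S j + 1 \<noteq> 0" using Snn[of j] by linarith
      have q0: "3 * (real j + 1) \<noteq> 0" by simp
      have "(S j + 1) * dl j (S j) = (S j + 1) * (e j / ((3 * (real j + 1)) * (S j + 1)))"
        unfolding dl_def by simp
      also have "\<dots> = e j * (S j + 1) / (3 * (real j + 1) * (S j + 1))"
        by (simp only: times_divide_eq_right mult.commute[of "S j + 1" "e j"])
      also have "\<dots> = e j / (3 * (real j + 1))" by (rule nonzero_mult_divide_mult_cancel_right[OF s0])
      finally show ?thesis .
    qed
    also have "\<dots> \<le> e j / 3" using epos[of j] by (simp add: field_simps)
    finally show ?thesis .
  qed
  have low: "f (x j) \<ge> e j / 3" using split tail head by linarith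
  have "\<bar>f (x j)\<bar> \<le> K * norm (x j)" using fK xs(1)[of j] by blast
  hence "f (x j) \<le> K * norm (x j)" by linarith
  also have "\<dots> \<le> K * dl j (S j)" using xs(3)[of j] K0 by (simp add: mult_left_mono)
  also have "\<dots> \<le> K * (e j / (3 * (real j + 1)))"
  proof -
    have "dl j (S j) \<le> e j / (3 * (real j + 1))"
    proof -
      have q: "0 < 3 * (real j + 1)" by simp
      have s1: "1 \<le> S j + 1" using Snn[of j] by simp
      have le: "3 * (real j + 1) * 1 \<le> 3 * (real j + 1) * (S j + 1)"
        by (rule mult_left_mono[OF s1]) (use q in simp)
      have pos: "0 < 3 * (real j + 1) * (S j + 1) * (3 * (real j + 1))"
        using q s1 by (intro mult_pos_pos) auto
      show ?thesis unfolding dl_def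
        by (rule divide_left_mono[OF le[unfolded mult_1_right] _ pos]) (use epos[of j] in simp)
    qed
    thus ?thesis using K0 by (rule mult_left_mono)
  qed
  finally have "e j / 3 \<le> K * (e j / (3 * (real j + 1)))" using low by linarith
  hence "e j / 3 * (real j + 1) \<le> K * (e j / (3 * (real j + 1))) * (real j + 1)"
    by (rule mult_right_mono) simp
  also have "K * (e j / (3 * (real j + 1))) * (real j + 1) = K * (e j / 3)"
  proof -
    have r0: "real j + 1 \<noteq> 0" by simp
    have "e j / (3 * (real j + 1)) * (real j + 1) = e j / 3"
    proof -
      have "e j / (3 * (real j + 1)) * (real j + 1) = e j / 3 / (real j + 1) * (real j + 1)"
        by (simp only: divide_divide_eq_left)
      also have "\<dots> = e j / 3" by (rule divide_mult_cancel_r0[OF r0])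
      finally show ?thesis .
    qed
    thus ?thesis by (simp only: mult.assoc)
  qed
  finally have "(real j + 1) * (e j / 3) \<le> K * (e j / 3)" by (simp only: mult.commute)
  hence "real j + 1 \<le> K" by (rule mult_right_le_imp_le) (use epos[of j] in simp)
  thus False using jK by linarith
qed



lemma dual_norm_bounds:
  fixes B :: "'a::real_vector set"
  assumes sub: "subspace B" and nB: "norm_on B nB" and M0: "M \<ge> 0"
    and hb: "\<forall>b\<in>B. \<bar>h b\<bar> \<le> M * nB b"
  shows "dual_norm B nB h \<le> M" "0 \<le> dual_norm B nB h"
proof -
  define T where "T = {\<bar>h b\<bar> | b. b \<in> B \<and> nB b \<le> 1}"
  have 0: "0 \<in> B" using sub by (rule subspace_0)
  have n0: "nB 0 = 0" using nB 0 unfolding norm_on_def by simp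
  have hT: "\<bar>h 0\<bar> \<in> T" unfolding T_def using 0 n0 by auto
  have Tle: "t \<le> M" if "t \<in> T" for t
  proof -
    obtain b where b: "t = \<bar>h b\<bar>" "b \<in> B" "nB b \<le> 1" using \<open>t \<in> T\<close> unfolding T_def by blast
    have "\<bar>h b\<bar> \<le> M * nB b" using hb b(2) by simp
    also have "\<dots> \<le> M * 1" using b(3) M0 by (rule mult_left_mono)
    finally show ?thesis using b(1) by simp
  qed
  have bdd: "bdd_above T" unfolding bdd_above_def using Tle by blast
  have "Sup T \<le> M" using hT Tle by (intro cSup_least) auto
  thus "dual_norm B nB h \<le> M" unfolding dual_norm_def T_def .
  have "\<bar>h 0\<bar> \<le> Sup T" by (rule cSup_upper[OF hT bdd])
  thus "0 \<le> dual_norm B nB h" unfolding dual_norm_def T_def[symmetric] by linarith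
qed

lemma bidual_apply_bound:
  fixes B :: "'a::real_vector set"
  assumes sub: "subspace B" and nB: "norm_on B nB" and m: "m \<in> bidual_sp B nB"
  shows "\<exists>Km\<ge>0. \<forall>h M. h \<in> dual_sp B nB \<longrightarrow> M \<ge> 0 \<longrightarrow> (\<forall>b\<in>B. \<bar>h b\<bar> \<le> M * nB b) \<longrightarrow> \<bar>m h\<bar> \<le> Km * M"
proof -
  obtain K where K: "\<forall>f\<in>dual_sp B nB. \<bar>m f\<bar> \<le> K * dual_norm B nB f"
    using m unfolding bidual_sp_def by blast
  show ?thesis
  proof (intro exI[of _ "max K 0"] conjI allI impI)
    fix h M assume h: "h \<in> dual_sp B nB" and M0: "M \<ge> 0" and hb: "\<forall>b\<in>B. \<bar>h b\<bar> \<le> M * nB b"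
    have d1: "dual_norm B nB h \<le> M" and d0: "0 \<le> dual_norm B nB h"
      using dual_norm_bounds[OF sub nB M0 hb] by auto
    have "\<bar>m h\<bar> \<le> K * dual_norm B nB h" using K h by simp
    also have "\<dots> \<le> max K 0 * dual_norm B nB h" by (rule mult_right_mono[OF _ d0]) simp
    also have "\<dots> \<le> max K 0 * M" by (rule mult_left_mono[OF d1]) simp
    finally show "\<bar>m h\<bar> \<le> max K 0 * M" .
  qed simp
qed

lemma span_bounded:
  fixes B :: "'a::real_normed_vector set"
  assumes S: "\<forall>v\<in>S. \<exists>K. \<forall>a\<in>B. \<bar>v a\<bar> \<le> K * norm a" and g: "g \<in> lin_span S"
  shows "\<exists>K. \<forall>a\<in>B. \<bar>g a\<bar> \<le> K * norm a"
proof -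
  have "\<exists>(n::nat) c v. (\<forall>i<n. v i \<in> S) \<and> g = (\<lambda>x. \<Sum>i<n. c i * v i x)"
    using g unfolding lin_span_def by (rule CollectD)
  then obtain n :: nat and c v where v: "\<forall>i<n. v i \<in> S" and gd: "g = (\<lambda>x. \<Sum>i<n. c i * v i x)"
    by blast
  have "\<forall>i. \<exists>K. i < n \<longrightarrow> (\<forall>a\<in>B. \<bar>v i a\<bar> \<le> K * norm a)" using v S by blast
  then obtain Kf where Kf: "\<And>i a. i < n \<Longrightarrow> a \<in> B \<Longrightarrow> \<bar>v i a\<bar> \<le> Kf i * norm a"
    by (metis choice)
  show ?thesis
  proof (intro exI ballI)
    fix a assume a: "a \<in> B"
    have "\<bar>g a\<bar> \<le> (\<Sum>i<n. \<bar>c i * v i a\<bar>)" unfolding gd by (rule sum_abs)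
    also have "\<dots> \<le> (\<Sum>i<n. \<bar>c i\<bar> * Kf i * norm a)"
    proof (rule sum_mono)
      fix i assume "i \<in> {..<n}"
      hence "\<bar>v i a\<bar> \<le> Kf i * norm a" using Kf a by simp
      hence "\<bar>c i\<bar> * \<bar>v i a\<bar> \<le> \<bar>c i\<bar> * (Kf i * norm a)" by (rule mult_left_mono) simp
      thus "\<bar>c i * v i a\<bar> \<le> \<bar>c i\<bar> * Kf i * norm a" by (simp add: abs_mult mult.assoc)
    qed
    also have "\<dots> = (\<Sum>i<n. \<bar>c i\<bar> * Kf i) * norm a" by (simp add: sum_distrib_right)
    finally show "\<bar>g a\<bar> \<le> (\<Sum>i<n. \<bar>c i\<bar> * Kf i) * norm a" .
  qed
qed

lemma composite_bound:
  fixes B :: "'a::real_vector set"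
  assumes sub: "subspace B" and nB: "norm_on B nB" and f: "f \<in> dual_sp B nB" and m: "m \<in> bidual_sp B nB"
  shows "\<exists>K\<ge>0. \<forall>\<phi> L. L \<ge> 0 \<longrightarrow> (\<forall>b\<in>B. \<phi> b \<in> B) \<longrightarrow>
     (\<forall>b\<in>B. \<forall>c\<in>B. \<phi> (b + c) = \<phi> b + \<phi> c) \<longrightarrow> (\<forall>b\<in>B. \<forall>r. \<phi> (r *\<^sub>R b) = r *\<^sub>R \<phi> b) \<longrightarrow>
     (\<forall>b\<in>B. nB (\<phi> b) \<le> L * nB b) \<longrightarrow> \<bar>m (\<lambda>b. if b \<in> B then f (\<phi> b) else 0)\<bar> \<le> K * L"
proof -
  have fd: "(\<forall>x. x \<notin> B \<longrightarrow> f x = 0) \<and>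
      (\<forall>b\<in>B. \<forall>c\<in>B. f (b + c) = f b + f c) \<and> (\<forall>b\<in>B. \<forall>r. f (r *\<^sub>R b) = r * f b) \<and>
      (\<exists>K. \<forall>b\<in>B. \<bar>f b\<bar> \<le> K * nB b)" using f unfolding dual_sp_def by (rule CollectD)
  have fadd: "\<forall>b\<in>B. \<forall>c\<in>B. f (b + c) = f b + f c" using fd by (elim conjE)
  have fsc: "\<forall>b\<in>B. \<forall>r. f (r *\<^sub>R b) = r * f b" using fd by (elim conjE)
  have "\<exists>K. \<forall>b\<in>B. \<bar>f b\<bar> \<le> K * nB b" using fd by (elim conjE)
  then obtain Kf where Kf: "\<forall>b\<in>B. \<bar>f b\<bar> \<le> Kf * nB b" by (elim exE)
  have nB0: "\<forall>b\<in>B. 0 \<le> nB b" using nB unfolding norm_on_def by (elim conjE)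
  obtain Km where Km0: "Km \<ge> 0" and Km: "\<forall>h M. h \<in> dual_sp B nB \<longrightarrow> M \<ge> 0 \<longrightarrow> (\<forall>b\<in>B. \<bar>h b\<bar> \<le> M * nB b) \<longrightarrow> \<bar>m h\<bar> \<le> Km * M"
    using bidual_apply_bound[OF sub nB m] by (elim exE conjE)
  show ?thesis
  proof (intro exI[of _ "Km * max Kf 0"] conjI allI impI)
    show "0 \<le> Km * max Kf 0" using Km0 by simp
    fix \<phi> :: "'a \<Rightarrow> 'a" and L :: real
    assume L0: "L \<ge> 0" and phB: "\<forall>b\<in>B. \<phi> b \<in> B" and phadd: "\<forall>b\<in>B. \<forall>c\<in>B. \<phi> (b + c) = \<phi> b + \<phi> c"
      and phsc: "\<forall>b\<in>B. \<forall>r. \<phi> (r *\<^sub>R b) = r *\<^sub>R \<phi> b" and phn: "\<forall>b\<in>B. nB (\<phi> b) \<le> L * nB b"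
    define h where "h = (\<lambda>b. if b \<in> B then f (\<phi> b) else 0)"
    have hb: "\<forall>b\<in>B. \<bar>h b\<bar> \<le> (max Kf 0 * L) * nB b"
    proof
      fix b assume b: "b \<in> B"
      have pb: "\<phi> b \<in> B" using phB b by simp
      have "\<bar>h b\<bar> = \<bar>f (\<phi> b)\<bar>" using b unfolding h_def by simp
      also have "\<dots> \<le> Kf * nB (\<phi> b)" using Kf pb by simp
      also have "\<dots> \<le> max Kf 0 * nB (\<phi> b)" by (rule mult_right_mono) (use nB0 pb in simp_all)
      also have "\<dots> \<le> max Kf 0 * (L * nB b)" by (rule mult_left_mono) (use phn b in simp_all)
      finally show "\<bar>h b\<bar> \<le> (max Kf 0 * L) * nB b" by (simp add: mult.assoc)
    qed
    have hd: "h \<in> dual_sp B nB" unfolding dual_sp_def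
    proof (intro CollectI conjI)
      show "\<forall>x. x \<notin> B \<longrightarrow> h x = 0" unfolding h_def by simp
      show "\<forall>b\<in>B. \<forall>c\<in>B. h (b + c) = h b + h c"
      proof (intro ballI)
        fix b c assume b: "b \<in> B" and c: "c \<in> B"
        have bc: "b + c \<in> B" using sub b c by (rule subspace_add)
        have "h (b + c) = f (\<phi> b + \<phi> c)" unfolding h_def using bc phadd b c by simp
        also have "\<dots> = f (\<phi> b) + f (\<phi> c)" using fadd phB b c by simp
        finally show "h (b + c) = h b + h c" unfolding h_def using b c by simp
      qed
      show "\<forall>b\<in>B. \<forall>r. h (r *\<^sub>R b) = r * h b"
      proof (intro ballI allI)
        fix b r assume b: "b \<in> B"
        have rb: "r *\<^sub>R b \<in> B" using sub b by (rule subspace_scale)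
        have "h (r *\<^sub>R b) = f (r *\<^sub>R \<phi> b)" unfolding h_def using rb phsc b by simp
        also have "\<dots> = r * f (\<phi> b)" using fsc phB b by simp
        finally show "h (r *\<^sub>R b) = r * h b" unfolding h_def using b by simp
      qed
      show "\<exists>K. \<forall>b\<in>B. \<bar>h b\<bar> \<le> K * nB b" using hb by (rule exI)
    qed
    have "\<bar>m h\<bar> \<le> Km * (max Kf 0 * L)" using Km hd hb L0 by simp
    thus "\<bar>m (\<lambda>b. if b \<in> B then f (\<phi> b) else 0)\<bar> \<le> Km * max Kf 0 * L"
      unfolding h_def by (simp add: mult.assoc)
  qed
qed

lemma right_case:
  fixes B :: "'a::{real_normed_algebra,banach} set" and nB :: "'a \<Rightarrow> real"
  assumes R: "right_abstract_Segal B nB" and P: "proper_Segal B nB"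
  shows "dual_sp B nB \<noteq> lin_span {ftr B f m | f m. f \<in> dual_sp B nB \<and> m \<in> bidual_sp B nB}"
proof
  assume eq: "dual_sp B nB = lin_span {ftr B f m | f m. f \<in> dual_sp B nB \<and> m \<in> bidual_sp B nB}"
  have R': "banach_subalgebra_norm B nB \<and> closure B = UNIV \<and> (\<forall>b\<in>B. \<forall>a. b * a \<in> B) \<and>
     (\<exists>C. (\<forall>b\<in>B. norm b \<le> C * nB b) \<and> (\<forall>b\<in>B. \<forall>a. nB (b * a) \<le> C * nB b * norm a))"
    using R unfolding right_abstract_Segal_def .
  have bs: "banach_subalgebra_norm B nB" using R' by (rule conjunct1)
  have bs': "subspace B \<and> (\<forall>b\<in>B. \<forall>c\<in>B. b * c \<in> B) \<and> norm_on B nB \<and> complete_wrt B nB \<and>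
     (\<forall>b\<in>B. \<forall>c\<in>B. nB (b * c) \<le> nB b * nB c)" using bs unfolding banach_subalgebra_norm_def .
  have sub: "subspace B" using bs' by (rule conjunct1)
  have nB: "norm_on B nB" using conjunct1[OF conjunct2[OF conjunct2[OF bs']]] .
  have ideal: "\<forall>b\<in>B. \<forall>a. b * a \<in> B" using conjunct1[OF conjunct2[OF conjunct2[OF R']]] .
  have "\<exists>C. (\<forall>b\<in>B. norm b \<le> C * nB b) \<and> (\<forall>b\<in>B. \<forall>a. nB (b * a) \<le> C * nB b * norm a)"
    using conjunct2[OF conjunct2[OF conjunct2[OF R']]] .
  then obtain C where Cb: "\<forall>b\<in>B. norm b \<le> C * nB b" and Cm: "\<forall>b\<in>B. \<forall>a. nB (b * a) \<le> C * nB b * norm a"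
    by (elim exE conjE)
  have nB0: "\<forall>b\<in>B. 0 \<le> nB b" using nB unfolding norm_on_def by (elim conjE)
  have Sb: "\<forall>v\<in>{ftr B f m | f m. f \<in> dual_sp B nB \<and> m \<in> bidual_sp B nB}. \<exists>K. \<forall>a\<in>B. \<bar>v a\<bar> \<le> K * norm a"
  proof
    fix v assume "v \<in> {ftr B f m | f m. f \<in> dual_sp B nB \<and> m \<in> bidual_sp B nB}"
    then obtain f m where v: "v = ftr B f m" and f: "f \<in> dual_sp B nB" and m: "m \<in> bidual_sp B nB" by blast
    obtain K where K0: "K \<ge> 0" and K: "\<forall>\<phi> L. L \<ge> 0 \<longrightarrow> (\<forall>b\<in>B. \<phi> b \<in> B) \<longrightarrow>
     (\<forall>b\<in>B. \<forall>c\<in>B. \<phi> (b + c) = \<phi> b + \<phi> c) \<longrightarrow> (\<forall>b\<in>B. \<forall>r. \<phi> (r *\<^sub>R b) = r *\<^sub>R \<phi> b) \<longrightarrow>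
     (\<forall>b\<in>B. nB (\<phi> b) \<le> L * nB b) \<longrightarrow> \<bar>m (\<lambda>b. if b \<in> B then f (\<phi> b) else 0)\<bar> \<le> K * L"
      using composite_bound[OF sub nB f m] by (elim exE conjE)
    show "\<exists>K. \<forall>a\<in>B. \<bar>v a\<bar> \<le> K * norm a"
    proof (intro exI ballI)
      fix a assume a: "a \<in> B"
      have L0: "max C 0 * norm a \<ge> 0" by simp
      have p1: "\<forall>b\<in>B. b * a \<in> B" using ideal by simp
      have p2: "\<forall>b\<in>B. \<forall>c\<in>B. (b + c) * a = b * a + c * a" by (simp add: distrib_right)
      have p3: "\<forall>b\<in>B. \<forall>r. (r *\<^sub>R b) * a = r *\<^sub>R (b * a)" by simp
      have p4: "\<forall>b\<in>B. nB (b * a) \<le> (max C 0 * norm a) * nB b"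
      proof
        fix b assume b: "b \<in> B"
        have "nB (b * a) \<le> C * nB b * norm a" using Cm b by simp
        also have "\<dots> \<le> max C 0 * nB b * norm a"
          by (intro mult_right_mono) (use nB0 b in simp_all)
        finally show "nB (b * a) \<le> (max C 0 * norm a) * nB b" by (simp add: mult_ac)
      qed
      have "\<bar>m (\<lambda>b. if b \<in> B then f (b * a) else 0)\<bar> \<le> K * (max C 0 * norm a)"
        by (rule mp[OF mp[OF mp[OF mp[OF mp[OF spec[OF spec[OF K, of "\<lambda>b. b * a"], of "max C 0 * norm a"] L0] p1] p2] p3] p4])
      moreover have "v a = m (\<lambda>b. if b \<in> B then f (b * a) else 0)"
        unfolding v ftr_def atr_def using a by simp
      ultimately show "\<bar>v a\<bar> \<le> (K * max C 0) * norm a" by (simp add: mult.assoc)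
    qed
  qed
  have allA: "\<forall>f\<in>dual_sp B nB. \<exists>K. \<forall>b\<in>B. \<bar>f b\<bar> \<le> K * norm b"
  proof
    fix f assume fd: "f \<in> dual_sp B nB"
    have sb: "dual_sp B nB \<subseteq> lin_span {ftr B f m | f m. f \<in> dual_sp B nB \<and> m \<in> bidual_sp B nB}" using eq by (rule equalityD1)
    have "f \<in> lin_span {ftr B f m | f m. f \<in> dual_sp B nB \<and> m \<in> bidual_sp B nB}" using subsetD[OF sb fd] .
    thus "\<exists>K. \<forall>b\<in>B. \<bar>f b\<bar> \<le> K * norm b" by (rule span_bounded[OF Sb])
  qed
  show False by (rule gliding_hump[OF sub nB Cb P allA])
qed

lemma left_case:
  fixes B :: "'a::{real_normed_algebra,banach} set" and nB :: "'a \<Rightarrow> real"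
  assumes R: "left_abstract_Segal B nB" and P: "proper_Segal B nB"
  shows "dual_sp B nB \<noteq> lin_span {msq B m f | m f. m \<in> bidual_sp B nB \<and> f \<in> dual_sp B nB}"
proof
  assume eq: "dual_sp B nB = lin_span {msq B m f | m f. m \<in> bidual_sp B nB \<and> f \<in> dual_sp B nB}"
  have R': "banach_subalgebra_norm B nB \<and> closure B = UNIV \<and> (\<forall>b\<in>B. \<forall>a. a * b \<in> B) \<and>
     (\<exists>C. (\<forall>b\<in>B. norm b \<le> C * nB b) \<and> (\<forall>b\<in>B. \<forall>a. nB (a * b) \<le> C * norm a * nB b))"
    using R unfolding left_abstract_Segal_def .
  have bs: "banach_subalgebra_norm B nB" using R' by (rule conjunct1)
  have bs': "subspace B \<and> (\<forall>b\<in>B. \<forall>c\<in>B. b * c \<in> B) \<and> norm_on B nB \<and> complete_wrt B nB \<and>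
     (\<forall>b\<in>B. \<forall>c\<in>B. nB (b * c) \<le> nB b * nB c)" using bs unfolding banach_subalgebra_norm_def .
  have sub: "subspace B" using bs' by (rule conjunct1)
  have nB: "norm_on B nB" using conjunct1[OF conjunct2[OF conjunct2[OF bs']]] .
  have ideal: "\<forall>b\<in>B. \<forall>a. a * b \<in> B" using conjunct1[OF conjunct2[OF conjunct2[OF R']]] .
  have "\<exists>C. (\<forall>b\<in>B. norm b \<le> C * nB b) \<and> (\<forall>b\<in>B. \<forall>a. nB (a * b) \<le> C * norm a * nB b)"
    using conjunct2[OF conjunct2[OF conjunct2[OF R']]] .
  then obtain C where Cb: "\<forall>b\<in>B. norm b \<le> C * nB b" and Cm: "\<forall>b\<in>B. \<forall>a. nB (a * b) \<le> C * norm a * nB b"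
    by (elim exE conjE)
  have nB0: "\<forall>b\<in>B. 0 \<le> nB b" using nB unfolding norm_on_def by (elim conjE)
  have Sb: "\<forall>v\<in>{msq B m f | m f. m \<in> bidual_sp B nB \<and> f \<in> dual_sp B nB}. \<exists>K. \<forall>a\<in>B. \<bar>v a\<bar> \<le> K * norm a"
  proof
    fix v assume "v \<in> {msq B m f | m f. m \<in> bidual_sp B nB \<and> f \<in> dual_sp B nB}"
    then obtain f m where v: "v = msq B m f" and f: "f \<in> dual_sp B nB" and m: "m \<in> bidual_sp B nB" by blast
    obtain K where K0: "K \<ge> 0" and K: "\<forall>\<phi> L. L \<ge> 0 \<longrightarrow> (\<forall>b\<in>B. \<phi> b \<in> B) \<longrightarrow>
     (\<forall>b\<in>B. \<forall>c\<in>B. \<phi> (b + c) = \<phi> b + \<phi> c) \<longrightarrow> (\<forall>b\<in>B. \<forall>r. \<phi> (r *\<^sub>R b) = r *\<^sub>R \<phi> b) \<longrightarrow>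
     (\<forall>b\<in>B. nB (\<phi> b) \<le> L * nB b) \<longrightarrow> \<bar>m (\<lambda>b. if b \<in> B then f (\<phi> b) else 0)\<bar> \<le> K * L"
      using composite_bound[OF sub nB f m] by (elim exE conjE)
    show "\<exists>K. \<forall>a\<in>B. \<bar>v a\<bar> \<le> K * norm a"
    proof (intro exI ballI)
      fix a assume a: "a \<in> B"
      have L0: "max C 0 * norm a \<ge> 0" by simp
      have p1: "\<forall>b\<in>B. a * b \<in> B" using ideal by simp
      have p2: "\<forall>b\<in>B. \<forall>c\<in>B. a * (b + c) = a * b + a * c" by (simp add: distrib_left)
      have p3: "\<forall>b\<in>B. \<forall>r. a * (r *\<^sub>R b) = r *\<^sub>R (a * b)" by simp
      have p4: "\<forall>b\<in>B. nB (a * b) \<le> (max C 0 * norm a) * nB b"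
      proof
        fix b assume b: "b \<in> B"
        have "nB (a * b) \<le> C * norm a * nB b" using Cm b by simp
        also have "\<dots> \<le> max C 0 * norm a * nB b"
          by (intro mult_right_mono) (use nB0 b in simp_all)
        finally show "nB (a * b) \<le> (max C 0 * norm a) * nB b" by (simp add: mult_ac)
      qed
      have "\<bar>m (\<lambda>b. if b \<in> B then f (a * b) else 0)\<bar> \<le> K * (max C 0 * norm a)"
        by (rule mp[OF mp[OF mp[OF mp[OF mp[OF spec[OF spec[OF K, of "\<lambda>b. a * b"], of "max C 0 * norm a"] L0] p1] p2] p3] p4])
      moreover have "v a = m (\<lambda>b. if b \<in> B then f (a * b) else 0)"
        unfolding v msq_def fsq_def using a by simp
      ultimately show "\<bar>v a\<bar> \<le> (K * max C 0) * norm a" by (simp add: mult.assoc)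
    qed
  qed
  have allA: "\<forall>f\<in>dual_sp B nB. \<exists>K. \<forall>b\<in>B. \<bar>f b\<bar> \<le> K * norm b"
  proof
    fix f assume fd: "f \<in> dual_sp B nB"
    have sb: "dual_sp B nB \<subseteq> lin_span {msq B m f | m f. m \<in> bidual_sp B nB \<and> f \<in> dual_sp B nB}" using eq by (rule equalityD1)
    have "f \<in> lin_span {msq B m f | m f. m \<in> bidual_sp B nB \<and> f \<in> dual_sp B nB}" using subsetD[OF sb fd] .
    thus "\<exists>K. \<forall>b\<in>B. \<bar>f b\<bar> \<le> K * norm b" by (rule span_bounded[OF Sb])
  qed
  show False by (rule gliding_hump[OF sub nB Cb P allA])
qed

theorem theorem1:
  fixes B :: "'a::{real_normed_algebra,banach} set" and nB :: "'a \<Rightarrow> real"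
  assumes "faithful_algebra TYPE('a)"
  shows "(right_abstract_Segal B nB \<and> proper_Segal B nB \<longrightarrow>
            dual_sp B nB \<noteq>
              lin_span {ftr B f m | f m. f \<in> dual_sp B nB \<and> m \<in> bidual_sp B nB})
       \<and> (left_abstract_Segal B nB \<and> proper_Segal B nB \<longrightarrow>
            dual_sp B nB \<noteq>
              lin_span {msq B m f | m f. m \<in> bidual_sp B nB \<and> f \<in> dual_sp B nB})"
  using right_case left_case by blast

end
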